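(* Let $(S^{(n)})$ be a sequence of $n\times n$ matrices with non-negative entries satisfying Assumption 2. Then for every $\varepsilon\in(0,1]$, \[ \sup_n\operatorname{perm}\left(I_n+(1-\varepsilon)S^{(n)}\right)<\infty, \] where $\operatorname{perm}$ denotes the permanent.
   Context: Assumption 2: for each $\varepsilon\in(0,1]$, $\liminf_n\min_{\gamma\in[0,1-\varepsilon]}\det(I_n-\gamma S^{(n)})>0$. *)

theory Defs
  imports "Jordan_Normal_Form.Determinant" "HOL-Library.Extended_Real" "HOL-Library.Liminf_Limsup"
begin

definition perm :: "'a mat \<Rightarrow> 'a :: comm_semiring_1" where
  "perm A = (if dim_row A = dim_col A then (\<Sum> p \<in> {p. p permutes {0 ..< dim_row A}}.
     (\<Prod> i = 0 ..< dim_row A. A $$ (i, p i))) else 0)"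

end

theory Submission
  imports Defs
begin

definition pr :: "(nat \<Rightarrow> nat \<Rightarrow> real) \<Rightarrow> nat set \<Rightarrow> real" where
 "pr A J = (\<Sum>p \<in> {p. p permutes J}. \<Prod>x\<in>J. A x (p x))"

definition tt :: "(nat \<Rightarrow> nat \<Rightarrow> real) \<Rightarrow> nat set \<Rightarrow> nat \<Rightarrow> nat \<Rightarrow> real" where
 "tt A J i j = (\<Sum>p \<in> {p. p permutes J \<and> p i = j}. \<Prod>x\<in>J-{i}. A x (p x))"

lemma pr_split:
  assumes "finite J" "i \<in> J"
  shows "pr A J = (\<Sum>j\<in>J. A i j * tt A J i j)"
proof -
  have fin: "finite {p. p permutes J}" using finite_permutations[OF assms(1)] by simp
  have "pr A J = (\<Sum>p \<in> {p. p permutes J}. A i (p i) * (\<Prod>x\<in>J-{i}. A x (p x)))"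
    unfolding pr_def by (rule sum.cong, simp, subst prod.remove[OF assms]) auto
  also have "\<dots> = (\<Sum>j\<in>J. \<Sum>p \<in> {p \<in> {p. p permutes J}. p i = j}. A i (p i) * (\<Prod>x\<in>J-{i}. A x (p x)))"
    by (rule sum.group[symmetric, OF fin assms(1)]) (auto simp: permutes_in_image assms)
  also have "\<dots> = (\<Sum>j\<in>J. A i j * tt A J i j)"
    unfolding tt_def sum_distrib_left by (rule sum.cong, simp, rule sum.cong) auto
  finally show ?thesis .
qed

lemma permutes_fix_iff: "(p permutes J \<and> p i = i) \<longleftrightarrow> p permutes (J - {i})"
proof
  assume "p permutes J \<and> p i = i"
  then show "p permutes (J - {i})" by (auto intro: permutes_superset)
next
  assume "p permutes (J - {i})"
  then show "p permutes J \<and> p i = i" by (auto intro: permutes_subset permutes_not_in)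
qed

lemma tt_diag: "tt A J i i = pr A (J - {i})"
  unfolding tt_def pr_def permutes_fix_iff by simp

lemma tt_rec:
  assumes "finite J" "i \<in> J" "j \<in> J" "i \<noteq> j"
  shows "tt A J i j = (\<Sum>l\<in>J-{j}. A j l * tt A (J-{j}) i l)"
proof -
  let ?t = "transpose i j"
  have "tt A J i j = (\<Sum>q \<in> {q. q permutes (J-{j})}. A j (q i) * (\<Prod>x\<in>J-{j}-{i}. A x (q x)))"
    unfolding tt_def
  proof (rule sum.reindex_bij_witness[where i = "\<lambda>q. q \<circ> ?t" and j = "\<lambda>p. p \<circ> ?t"])
    fix q assume q: "q \<in> {q. q permutes (J-{j})}"
    show "q \<circ> ?t \<circ> ?t = q" by (rule ext) (simp add: transpose_def)
    have qJ: "q permutes J" using q permutes_subset[of q "J-{j}" J] by blast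
    have "q \<circ> ?t permutes J"
      by (rule permutes_compose[OF permutes_swap_id[OF assms(2,3)] qJ])
    moreover have "(q \<circ> ?t) i = j" using q permutes_not_in[of q "J-{j}" j] by simp
    ultimately show "q \<circ> ?t \<in> {p. p permutes J \<and> p i = j}" by simp
  next
    fix p assume p: "p \<in> {p. p permutes J \<and> p i = j}"
    show "p \<circ> ?t \<circ> ?t = p" by (rule ext) (simp add: transpose_def)
    have pa: "p \<circ> ?t permutes J" using p permutes_compose[OF permutes_swap_id[OF assms(2,3)]] by blast
    have pb: "(p \<circ> ?t) j = j" using p by simp
    have "p \<circ> ?t permutes (J-{j})" by (rule iffD1[OF permutes_fix_iff conjI[OF pa pb]])
    then show "p \<circ> ?t \<in> {q. q permutes (J-{j})}" by (simp only: mem_Collect_eq)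
    have "(\<Prod>x\<in>J-{i}. A x (p x)) = A j (p j) * (\<Prod>x\<in>J-{i}-{j}. A x (p x))"
      using assms by (subst prod.remove[of _ j]) auto
    also have "\<dots> = A j ((p \<circ> ?t) i) * (\<Prod>x\<in>J-{j}-{i}. A x ((p \<circ> ?t) x))"
    proof -
      have e: "J-{i}-{j} = J-{j}-{i}" by blast
      have "(\<Prod>x\<in>J-{j}-{i}. A x ((p \<circ> ?t) x)) = (\<Prod>x\<in>J-{j}-{i}. A x (p x))"
        proof (rule prod.cong[OF refl])
          fix x assume "x \<in> J-{j}-{i}"
          then have "x \<noteq> i" "x \<noteq> j" by blast+
          then show "A x ((p \<circ> ?t) x) = A x (p x)" by (simp add: transpose_def)
        qed
      then show ?thesis by (simp only: e o_apply transpose_apply_first)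
    qed
    finally show "A j ((p \<circ> ?t) i) * (\<Prod>x\<in>J-{j}-{i}. A x ((p \<circ> ?t) x)) = (\<Prod>x\<in>J-{i}. A x (p x))" by (rule sym)
  qed
  also have "\<dots> = (\<Sum>l\<in>J-{j}. \<Sum>q \<in> {q \<in> {q. q permutes (J-{j})}. q i = l}. A j (q i) * (\<Prod>x\<in>J-{j}-{i}. A x (q x)))"
  proof (rule sum.group[symmetric])
    show "finite {q. q permutes (J-{j})}" using assms(1) finite_permutations by blast
    show "finite (J-{j})" using assms(1) by blast
    show "(\<lambda>q. q i) ` {q. q permutes (J-{j})} \<subseteq> J-{j}"
      using assms permutes_in_image by fastforce
  qed
  also have "\<dots> = (\<Sum>l\<in>J-{j}. A j l * tt A (J-{j}) i l)"
  proof (rule sum.cong[OF refl])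
    fix l assume "l \<in> J-{j}"
    have e: "{q \<in> {q. q permutes (J-{j})}. q i = l} = {p. p permutes (J-{j}) \<and> p i = l}" by blast
    show "(\<Sum>q \<in> {q \<in> {q. q permutes (J-{j})}. q i = l}. A j (q i) * (\<Prod>x\<in>J-{j}-{i}. A x (q x))) = A j l * tt A (J-{j}) i l"
      unfolding tt_def sum_distrib_left e by (rule sum.cong[OF refl]) simp
  qed
  finally show ?thesis .
qed

definition AB :: "(nat \<Rightarrow> nat \<Rightarrow> real) \<Rightarrow> nat \<Rightarrow> nat \<Rightarrow> real" where
  "AB B x y = (if x = y then 1 else 0) + B x y"

fun V :: "(nat \<Rightarrow> nat \<Rightarrow> real) \<Rightarrow> nat \<Rightarrow> nat \<Rightarrow> nat \<Rightarrow> nat \<Rightarrow> real" where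
  "V B k 0 i j = 0"
| "V B k (Suc L) i j = (if i = j then 1 else 0) + (\<Sum>l<k. B i l * V B k L l j)"

lemma V_nonneg: "(\<And>x y. 0 \<le> B x y) \<Longrightarrow> 0 \<le> V B k L i j"
  by (induction L arbitrary: i j) (auto intro!: add_nonneg_nonneg sum_nonneg mult_nonneg_nonneg)

lemma AB_nonneg: "(\<And>x y. 0 \<le> B x y) \<Longrightarrow> 0 \<le> AB B x y"
  unfolding AB_def by (auto intro: add_nonneg_nonneg)

lemma pr_nonneg: "(\<And>x y. 0 \<le> A x y) \<Longrightarrow> 0 \<le> pr A J"
  unfolding pr_def by (intro sum_nonneg prod_nonneg) auto

lemma tt_nonneg: "(\<And>x y. 0 \<le> A x y) \<Longrightarrow> 0 \<le> tt A J i j"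
  unfolding tt_def by (intro sum_nonneg prod_nonneg) auto

lemma pr_remove_le:
  assumes B: "\<And>x y. 0 \<le> B x y" and J: "finite J" "j \<in> J"
  shows "pr (AB B) (J - {j}) \<le> pr (AB B) J"
proof -
  have p0: "0 \<le> pr (AB B) (J - {j})" by (rule pr_nonneg[OF AB_nonneg[OF B]])
  have "0 \<le> B j j * pr (AB B) (J - {j})" using p0 B by simp
  then have "pr (AB B) (J - {j}) \<le> AB B j j * tt (AB B) J j j"
    unfolding tt_diag by (simp add: AB_def distrib_right)
  also have "\<dots> \<le> (\<Sum>l\<in>J. AB B j l * tt (AB B) J j l)"
    by (rule member_le_sum[OF J(2)]) (auto intro!: mult_nonneg_nonneg AB_nonneg tt_nonneg B J)
  also have "\<dots> = pr (AB B) J" using pr_split[OF J] by simp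
  finally show ?thesis .
qed

lemma V_Suc_row:
  assumes "j < k"
  shows "(\<Sum>m<k. V B k (Suc L) j m * B m k) = B j k + (\<Sum>l<k. B j l * (\<Sum>m<k. V B k L l m * B m k))"
proof -
  have "(\<Sum>m<k. V B k (Suc L) j m * B m k) = (\<Sum>m<k. (if j = m then 1 else 0) * B m k) + (\<Sum>m<k. \<Sum>l<k. B j l * V B k L l m * B m k)"
    by (simp add: sum.distrib distrib_right sum_distrib_right mult.assoc)
  also have "(\<Sum>m<k. (if j = m then 1 else 0) * B m k) = (\<Sum>m<k. (if j = m then B m k else 0))"
    by (rule sum.cong) auto
  also have "\<dots> = B j k" using assms by (simp add: sum.delta)
  also have "(\<Sum>m<k. \<Sum>l<k. B j l * V B k L l m * B m k) = (\<Sum>l<k. B j l * (\<Sum>m<k. V B k L l m * B m k))"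
    by (subst sum.swap) (simp add: sum_distrib_left mult.assoc)
  finally show ?thesis .
qed

lemma tt_walk_bound:
  assumes B: "\<And>x y. 0 \<le> B x y"
  shows "finite J \<Longrightarrow> J \<subseteq> {..<k} \<Longrightarrow> j \<in> J \<Longrightarrow> card J = n \<Longrightarrow>
    tt (AB B) (insert k J) k j \<le> pr (AB B) J * (\<Sum>m<k. V B k n j m * B m k)"
proof (induction n arbitrary: J j)
  case 0
  then show ?case by auto
next
  case (Suc n)
  define A where "A = AB B"
  define W where "W = (\<lambda>L l. (\<Sum>m<k. V B k L l m * B m k))"
  define J' where "J' = J - {j}"
  define P where "P = pr A J'"
  have kJ: "k \<notin> J" using Suc.prems by auto
  have jk: "j < k" "j \<noteq> k" using Suc.prems by auto
  have Wn: "\<And>L l. 0 \<le> W L l" unfolding W_def by (intro sum_nonneg mult_nonneg_nonneg V_nonneg B)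
  have Pn: "0 \<le> P" unfolding P_def A_def by (intro pr_nonneg AB_nonneg B)
  have e1: "insert k J - {j} = insert k J'" using jk unfolding J'_def by auto
  have kJ': "k \<notin> J'" "finite J'" using kJ Suc.prems unfolding J'_def by auto
  have "tt A (insert k J) k j = (\<Sum>l\<in>insert k J'. A j l * tt A (insert k J') k l)"
    unfolding e1[symmetric] by (rule tt_rec) (use Suc.prems jk in auto)
  also have "\<dots> = A j k * tt A (insert k J') k k + (\<Sum>l\<in>J'. A j l * tt A (insert k J') k l)"
    using kJ' by (simp add: sum.insert)
  finally have eq: "tt A (insert k J) k j = A j k * tt A (insert k J') k k + (\<Sum>l\<in>J'. A j l * tt A (insert k J') k l)" .
  have t1: "tt A (insert k J') k k = P" unfolding P_def using kJ' by (simp add: tt_diag)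
  have a1: "A j k = B j k" using jk by (simp add: A_def AB_def)
  have s1: "(\<Sum>l\<in>J'. A j l * tt A (insert k J') k l) \<le> (\<Sum>l\<in>J'. B j l * (P * W n l))"
  proof (rule sum_mono)
    fix l assume l: "l \<in> J'"
    have "A j l = B j l" using l by (simp add: A_def AB_def J'_def)
    moreover have "tt A (insert k J') k l \<le> P * W n l"
      unfolding A_def P_def W_def J'_def by (rule Suc.IH) (use Suc.prems l J'_def in auto)
    ultimately show "A j l * tt A (insert k J') k l \<le> B j l * (P * W n l)"
      by (simp add: mult_left_mono B)
  qed
  have s2: "(\<Sum>l\<in>J'. B j l * (P * W n l)) \<le> (\<Sum>l<k. B j l * (P * W n l))"
    by (rule sum_mono2) (use Suc.prems J'_def in \<open>auto intro!: mult_nonneg_nonneg B Pn Wn\<close>)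
  have s3: "B j k * P + (\<Sum>l<k. B j l * (P * W n l)) = P * W (Suc n) j"
    using V_Suc_row[OF jk(1), of B n] unfolding W_def by (simp add: algebra_simps sum_distrib_left)
  have s4: "P \<le> pr A J" unfolding P_def A_def J'_def
    by (rule pr_remove_le[OF B]) (use Suc.prems in auto)
  have s5: "P * W (Suc n) j \<le> pr A J * W (Suc n) j" by (rule mult_right_mono[OF s4 Wn])
  have "tt A (insert k J) k j \<le> pr A J * W (Suc n) j"
    using eq t1 a1 s1 s2 s3 s5 by (simp add: mult.commute)
  then show ?case unfolding A_def W_def .
qed

lemma pr_step:
  assumes B: "\<And>x y. 0 \<le> B x y"
  shows "pr (AB B) {..<Suc k} \<le> pr (AB B) {..<k} * (1 + B k k + (\<Sum>j<k. B k j * (\<Sum>m<k. V B k k j m * B m k)))"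
proof -
  define A where "A = AB B"
  define P where "P = pr A {..<k}"
  have e0: "{..<Suc k} = insert k {..<k}" by auto
  have "pr A {..<Suc k} = (\<Sum>j\<in>insert k {..<k}. A k j * tt A (insert k {..<k}) k j)"
    unfolding e0 by (rule pr_split) auto
  also have "\<dots> = A k k * tt A (insert k {..<k}) k k + (\<Sum>j<k. A k j * tt A (insert k {..<k}) k j)"
    by (simp add: sum.insert)
  finally have eq: "pr A {..<Suc k} = A k k * tt A (insert k {..<k}) k k + (\<Sum>j<k. A k j * tt A (insert k {..<k}) k j)" .
  have t1: "tt A (insert k {..<k}) k k = P" unfolding P_def by (simp add: tt_diag)
  have a1: "A k k = 1 + B k k" by (simp add: A_def AB_def)
  have s1: "(\<Sum>j<k. A k j * tt A (insert k {..<k}) k j) \<le> (\<Sum>j<k. B k j * (P * (\<Sum>m<k. V B k k j m * B m k)))"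
  proof (rule sum_mono)
    fix j assume j: "j \<in> {..<k}"
    have "A k j = B k j" using j by (simp add: A_def AB_def)
    moreover have "tt A (insert k {..<k}) k j \<le> P * (\<Sum>m<k. V B k k j m * B m k)"
      unfolding A_def P_def by (rule tt_walk_bound[OF B]) (use j in auto)
    ultimately show "A k j * tt A (insert k {..<k}) k j \<le> B k j * (P * (\<Sum>m<k. V B k k j m * B m k))"
      by (simp add: mult_left_mono B)
  qed
  have "pr A {..<Suc k} \<le> P * (1 + B k k + (\<Sum>j<k. B k j * (\<Sum>m<k. V B k k j m * B m k)))"
    using eq t1 a1 s1 by (simp add: algebra_simps sum_distrib_left)
  then show ?thesis unfolding A_def P_def .
qed

definition mk :: "(nat \<Rightarrow> nat \<Rightarrow> real) \<Rightarrow> nat \<Rightarrow> real mat" where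
  "mk B k = mat k k (\<lambda>(i,j). (if i = j then 1 else 0) - B i j)"

definition DD :: "(nat \<Rightarrow> nat \<Rightarrow> real) \<Rightarrow> nat \<Rightarrow> real" where
  "DD B k = det (mk B k)"

definition rinv :: "(nat \<Rightarrow> nat \<Rightarrow> real) \<Rightarrow> nat \<Rightarrow> (nat \<Rightarrow> nat \<Rightarrow> real) \<Rightarrow> bool" where
  "rinv B k N \<longleftrightarrow> (\<forall>i<k. \<forall>j<k. (\<Sum>l<k. ((if i = l then 1 else 0) - B i l) * N l j) = (if i = j then 1 else 0))"

definition uu :: "(nat \<Rightarrow> nat \<Rightarrow> real) \<Rightarrow> nat \<Rightarrow> (nat \<Rightarrow> nat \<Rightarrow> real) \<Rightarrow> nat \<Rightarrow> real" where
  "uu B k N j = (\<Sum>l<k. N j l * B l k)"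

definition ss :: "(nat \<Rightarrow> nat \<Rightarrow> real) \<Rightarrow> nat \<Rightarrow> (nat \<Rightarrow> nat \<Rightarrow> real) \<Rightarrow> real" where
  "ss B k N = 1 - B k k - (\<Sum>j<k. B k j * uu B k N j)"

lemma mult_mat_entry:
  fixes f g :: "nat \<times> nat \<Rightarrow> real"
  assumes "i < n" "j < n"
  shows "(mat n n f * mat n n g) $$ (i,j) = (\<Sum>l<n. f (i,l) * g (l,j))"
  using assms by (simp add: scalar_prod_def atLeast0LessThan)

lemma rinv_uu:
  assumes "rinv B k N" "i < k"
  shows "(\<Sum>l<k. ((if i = l then 1 else 0) - B i l) * uu B k N l) = B i k"
proof -
  have "(\<Sum>l<k. ((if i = l then 1 else 0) - B i l) * uu B k N l)
      = (\<Sum>t<k. (\<Sum>l<k. ((if i = l then 1 else 0) - B i l) * N l t) * B t k)"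
    unfolding uu_def sum_distrib_left sum_distrib_right
    by (subst sum.swap) (simp add: mult.assoc)
  also have "\<dots> = (\<Sum>t<k. (if i = t then 1 else 0) * B t k)"
    using assms unfolding rinv_def by (intro sum.cong) auto
  also have "\<dots> = (\<Sum>t<k. (if i = t then B t k else 0))" by (rule sum.cong) auto
  also have "\<dots> = B i k" using assms by (simp add: sum.delta)
  finally show ?thesis .
qed

lemma border_det:
  assumes R: "rinv B k N"
  shows "DD B (Suc k) = DD B k * ss B k N"
proof -
  define n where "n = Suc k"
  define f where "f = (\<lambda>(i::nat,j::nat). (if i = j then 1 else 0) - B i j)"
  define g where "g = (\<lambda>(i::nat,j::nat). if i = j then 1 else if j = k then uu B k N i else (0::real))"
  define M where "M = mat n n f"
  define E where "E = mat n n g"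
  define F where "F = M * E"
  have M: "M \<in> carrier_mat n n" and E: "E \<in> carrier_mat n n" unfolding M_def E_def by auto
  have F: "F \<in> carrier_mat n n" unfolding F_def using M E by auto
  have ut: "upper_triangular E" unfolding upper_triangular_def E_def g_def n_def by auto
  have "det E = prod_list (diag_mat E)" by (rule det_upper_triangular[OF ut E])
  also have "diag_mat E = map (\<lambda>i. 1) [0..<n]"
    unfolding diag_mat_def E_def g_def by auto
  also have "prod_list (map (\<lambda>i. 1::real) [0..<n]) = 1" by (induction n) auto
  finally have dE: "det E = 1" .
  have dF: "det F = det M" unfolding F_def using det_mult[OF M E] dE by simp
  have Fk: "F $$ (i, k) = 0" if "i < k" for i
  proof -
    have "F $$ (i, k) = (\<Sum>l<Suc k. f (i,l) * g (l,k))"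
      unfolding F_def M_def E_def n_def by (rule mult_mat_entry) (use that in \<open>auto simp: n_def\<close>)
    also have "\<dots> = (\<Sum>l<k. ((if i = l then 1 else 0) - B i l) * uu B k N l) + f (i,k)"
      by (simp add: f_def g_def)
    also have "\<dots> = 0" using rinv_uu[OF R that] that by (simp add: f_def)
    finally show ?thesis .
  qed
  have Fkk: "F $$ (k, k) = ss B k N"
  proof -
    have "F $$ (k, k) = (\<Sum>l<Suc k. f (k,l) * g (l,k))"
      unfolding F_def M_def E_def n_def by (rule mult_mat_entry) (auto simp: n_def)
    also have "\<dots> = (\<Sum>l<k. (- B k l) * uu B k N l) + (1 - B k k)"
      by (simp add: f_def g_def)
    also have "\<dots> = ss B k N" unfolding ss_def by (simp add: sum_negf)
    finally show ?thesis .
  qed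
  have Fd: "mat_delete F k k = mk B k"
  proof (rule eq_matI)
    show "dim_row (mat_delete F k k) = dim_row (mk B k)" using F by (simp add: mk_def n_def)
    show "dim_col (mat_delete F k k) = dim_col (mk B k)" using F by (simp add: mk_def n_def)
    fix i j assume i: "i < dim_row (mk B k)" and j: "j < dim_col (mk B k)"
    then have ik: "i < k" and jk: "j < k" by (auto simp: mk_def)
    have "mat_delete F k k $$ (i, j) = F $$ (i, j)"
      unfolding mat_delete_def using F ik jk by (simp add: n_def)
    also have "\<dots> = (\<Sum>l<Suc k. f (i,l) * g (l,j))"
      unfolding F_def M_def E_def n_def by (rule mult_mat_entry) (use ik jk in \<open>auto simp: n_def\<close>)
    also have "\<dots> = (\<Sum>l<Suc k. if l = j then f (i,l) else 0)"
      using jk by (intro sum.cong) (auto simp: g_def)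
    also have "\<dots> = f (i, j)" using jk by (simp add: sum.delta)
    also have "\<dots> = mk B k $$ (i, j)" using ik jk by (simp add: mk_def f_def)
    finally show "mat_delete F k k $$ (i, j) = mk B k $$ (i, j)" .
  qed
  have "det F = (\<Sum>i<n. F $$ (i,k) * cofactor F i k)"
    by (rule laplace_expansion_column[OF F]) (simp add: n_def)
  also have "\<dots> = F $$ (k,k) * cofactor F k k"
    unfolding n_def lessThan_Suc using Fk by (simp add: sum.insert)
  also have "\<dots> = ss B k N * DD B k"
    unfolding cofactor_def Fkk Fd DD_def by simp
  finally have "det F = ss B k N * DD B k" .
  moreover have "M = mk B (Suc k)" unfolding M_def mk_def f_def n_def by simp
  ultimately show ?thesis using dF unfolding DD_def by simp
qed

definition ww :: "(nat \<Rightarrow> nat \<Rightarrow> real) \<Rightarrow> nat \<Rightarrow> (nat \<Rightarrow> nat \<Rightarrow> real) \<Rightarrow> nat \<Rightarrow> real" where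
  "ww B k N j = (\<Sum>l<k. B k l * N l j)"

definition ext :: "(nat \<Rightarrow> nat \<Rightarrow> real) \<Rightarrow> nat \<Rightarrow> (nat \<Rightarrow> nat \<Rightarrow> real) \<Rightarrow> nat \<Rightarrow> nat \<Rightarrow> real" where
  "ext B k N i j = (let s = ss B k N in
     if i < k \<and> j < k then N i j + uu B k N i * ww B k N j / s
     else if i < k then uu B k N i / s
     else if j < k then ww B k N j / s
     else 1 / s)"

lemma rinv_ext:
  assumes R: "rinv B k N" and s: "ss B k N \<noteq> 0"
  shows "rinv B (Suc k) (ext B k N)"
  unfolding rinv_def
proof (intro allI impI)
  fix i j assume i: "i < Suc k" and j: "j < Suc k"
  define s where "s = ss B k N"
  define m where "m = (\<lambda>i l. (if i = l then 1 else 0) - B i l :: real)"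
  have sk: "(\<Sum>l<k. m k l * uu B k N l) = s - 1 + B k k"
    unfolding s_def ss_def m_def by (simp add: sum_negf)
  have wk: "(\<Sum>l<k. m k l * N l j') = - ww B k N j'" for j'
    unfolding ww_def m_def by (simp add: sum_negf)
  have mN: "(\<Sum>l<k. m i' l * N l j') = (if i' = j' then 1 else 0)" if "i' < k" "j' < k" for i' j'
    using R that unfolding rinv_def m_def by blast
  have mu: "(\<Sum>l<k. m i' l * uu B k N l) = B i' k" if "i' < k" for i'
    using rinv_uu[OF R that] unfolding m_def .
  have "(\<Sum>l<Suc k. m i l * ext B k N l j) = (\<Sum>l<k. m i l * ext B k N l j) + m i k * ext B k N k j"
    by simp
  also have "\<dots> = (if i = j then 1 else 0)"
  proof (cases "i < k")
    case True
    note ik = True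
    show ?thesis
    proof (cases "j < k")
      case True
      have "(\<Sum>l<k. m i l * ext B k N l j) = (\<Sum>l<k. m i l * N l j) + (\<Sum>l<k. m i l * uu B k N l) * ww B k N j / s"
        using True unfolding ext_def Let_def s_def[symmetric]
        by (simp add: sum.distrib distrib_left sum_distrib_right sum_divide_distrib mult.assoc)
      then show ?thesis using mN[OF ik True] mu[OF ik] True ik
        by (simp add: ext_def Let_def s_def[symmetric] m_def)
    next
      case False
      then have jk: "j = k" using j by simp
      have "(\<Sum>l<k. m i l * ext B k N l j) = (\<Sum>l<k. m i l * uu B k N l) / s"
        using jk unfolding ext_def Let_def s_def[symmetric]
        by (simp add: sum_divide_distrib)
      then show ?thesis using mu[OF ik] jk ik
        by (simp add: ext_def Let_def s_def[symmetric] m_def)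
    qed
  next
    case False
    then have ik: "i = k" using i by simp
    show ?thesis
    proof (cases "j < k")
      case True
      have "(\<Sum>l<k. m i l * ext B k N l j) = (\<Sum>l<k. m k l * N l j) + (\<Sum>l<k. m k l * uu B k N l) * ww B k N j / s"
        using True ik unfolding ext_def Let_def s_def[symmetric]
        by (simp add: sum.distrib distrib_left sum_distrib_right sum_divide_distrib mult.assoc)
      also have "\<dots> = - ww B k N j + (s - 1 + B k k) * ww B k N j / s"
        using wk sk by simp
      finally have e: "(\<Sum>l<k. m i l * ext B k N l j) = - ww B k N j + (s - 1 + B k k) * ww B k N j / s" .
      have "m i k * ext B k N k j = (1 - B k k) * ww B k N j / s"
        using True ik by (simp add: ext_def Let_def s_def[symmetric] m_def)
      moreover have "(s - 1 + B k k) * ww B k N j / s + (1 - B k k) * ww B k N j / s = ww B k N j"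
        using s unfolding s_def[symmetric] by (simp add: field_simps)
      ultimately show ?thesis using e True ik by simp
    next
      case False
      then have jk: "j = k" using j by simp
      have "(\<Sum>l<k. m i l * ext B k N l j) = (\<Sum>l<k. m k l * uu B k N l) / s"
        using jk ik unfolding ext_def Let_def s_def[symmetric]
        by (simp add: sum_divide_distrib)
      also have "\<dots> = (s - 1 + B k k) / s" using sk by simp
      finally have e: "(\<Sum>l<k. m i l * ext B k N l j) = (s - 1 + B k k) / s" .
      have e2: "m i k * ext B k N k j = (1 - B k k) / s"
        using jk ik by (simp add: ext_def Let_def s_def[symmetric] m_def)
      have "(s - 1 + B k k) / s + (1 - B k k) / s = 1"
        using s unfolding s_def[symmetric] by (simp add: field_simps)
      then show ?thesis using e e2 jk ik by simp
    qed
  qed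
  finally show "(\<Sum>l<Suc k. ((if i = l then 1 else 0) - B i l) * ext B k N l j) = (if i = j then 1 else 0)"
    unfolding m_def .
qed

lemma ext_nonneg:
  assumes B: "\<And>x y. 0 \<le> B x y" and N: "\<And>i j. i < k \<Longrightarrow> j < k \<Longrightarrow> 0 \<le> N i j"
    and s: "0 < ss B k N"
  shows "0 \<le> ext B k N i j"
proof -
  have u: "0 \<le> uu B k N i'" if "i' < k" for i' unfolding uu_def using that
    by (intro sum_nonneg mult_nonneg_nonneg N B) auto
  have w: "0 \<le> ww B k N j'" if "j' < k" for j' unfolding ww_def using that
    by (intro sum_nonneg mult_nonneg_nonneg N B) auto
  show ?thesis unfolding ext_def Let_def using s u w N
    by (auto intro!: add_nonneg_nonneg divide_nonneg_pos mult_nonneg_nonneg)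
qed

lemma walk_le_inv:
  assumes B: "\<And>x y. 0 \<le> B x y" and R: "rinv B k N" and N: "\<And>i j. i < k \<Longrightarrow> j < k \<Longrightarrow> 0 \<le> N i j"
  shows "i < k \<Longrightarrow> j < k \<Longrightarrow> V B k L i j \<le> N i j"
proof (induction L arbitrary: i j)
  case 0
  then show ?case using N by simp
next
  case (Suc L)
  have "(\<Sum>l<k. ((if i = l then 1 else 0) - B i l) * N l j) = (if i = j then 1 else 0)"
    using R Suc.prems unfolding rinv_def by blast
  moreover have "(\<Sum>l<k. ((if i = l then 1 else 0) - B i l) * N l j) = (\<Sum>l<k. (if i = l then N l j else 0)) - (\<Sum>l<k. B i l * N l j)"
    by (subst sum_subtractf[symmetric], rule sum.cong) (auto simp: left_diff_distrib)
  moreover have "(\<Sum>l<k. (if i = l then N l j else 0)) = N i j" using Suc.prems by (simp add: sum.delta)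
  ultimately have eq: "N i j = (if i = j then 1 else 0) + (\<Sum>l<k. B i l * N l j)" by simp
  have "(\<Sum>l<k. B i l * V B k L l j) \<le> (\<Sum>l<k. B i l * N l j)"
    by (rule sum_mono, rule mult_left_mono[OF Suc.IH B]) (use Suc.prems in auto)
  then show ?case using eq by simp
qed

lemma chain_inv:
  assumes B: "\<And>x y. 0 \<le> B x y"
  shows "(\<forall>j\<le>k. 0 < DD B j) \<Longrightarrow> \<exists>N. rinv B k N \<and> (\<forall>i<k. \<forall>j<k. 0 \<le> N i j)"
proof (induction k)
  case 0
  then show ?case unfolding rinv_def by auto
next
  case (Suc k)
  then obtain N where R: "rinv B k N" and N: "\<forall>i<k. \<forall>j<k. 0 \<le> N i j" by auto
  have "DD B (Suc k) = DD B k * ss B k N" by (rule border_det[OF R])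
  moreover have "0 < DD B (Suc k)" "0 < DD B k" using Suc.prems by auto
  ultimately have s: "0 < ss B k N" by (simp add: zero_less_mult_iff)
  show ?case
    by (rule exI[of _ "ext B k N"], intro conjI rinv_ext[OF R] allI impI ext_nonneg[OF B])
       (use s N in auto)
qed

lemma ss_le1:
  assumes B: "\<And>x y. 0 \<le> B x y" and N: "\<forall>i<k. \<forall>j<k. 0 \<le> N i j"
  shows "ss B k N \<le> 1"
proof -
  have "0 \<le> (\<Sum>j<k. B k j * uu B k N j)" unfolding uu_def
    using N by (intro sum_nonneg mult_nonneg_nonneg B) auto
  then show ?thesis unfolding ss_def using B[of k k] by simp
qed

lemma DD_dec:
  assumes B: "\<And>x y. 0 \<le> B x y" and P: "\<forall>j\<le>Suc k. 0 < DD B j"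
  shows "DD B (Suc k) \<le> DD B k"
proof -
  have "\<forall>j\<le>k. 0 < DD B j" using P by auto
  then obtain N where R: "rinv B k N" and N: "\<forall>i<k. \<forall>j<k. 0 \<le> N i j"
    using chain_inv[where B=B, OF B] by blast
  have "DD B (Suc k) = DD B k * ss B k N" by (rule border_det[OF R])
  moreover have "0 < DD B k" using P by auto
  ultimately show ?thesis using ss_le1[OF B N] by (simp add: mult_left_le)
qed

lemma DD_dec_chain:
  assumes B: "\<And>x y. 0 \<le> B x y"
  shows "(\<forall>j\<le>n. 0 < DD B j) \<Longrightarrow> i \<le> n \<Longrightarrow> DD B n \<le> DD B i"
proof (induction n)
  case 0 then show ?case by simp
next
  case (Suc n)
  show ?case
  proof (cases "i = Suc n")
    case True then show ?thesis by simp
  next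
    case False
    then have "DD B n \<le> DD B i" using Suc by auto
    moreover have "DD B (Suc n) \<le> DD B n" by (rule DD_dec[OF B]) (use Suc.prems in auto)
    ultimately show ?thesis by simp
  qed
qed

lemma DD_0: "DD B 0 = 1"
proof -
  have "mk B 0 = 1\<^sub>m 0" by (rule eq_matI) (auto simp: mk_def)
  then show ?thesis unfolding DD_def by simp
qed

lemma pr_empty: "pr A {} = 1"
  unfolding pr_def by simp

lemma pr_DD_le1:
  assumes B: "\<And>x y. 0 \<le> B x y"
  shows "(\<forall>j\<le>k. 0 < DD B j) \<Longrightarrow> pr (AB B) {..<k} * DD B k \<le> 1"
proof (induction k)
  case 0 then show ?case by (simp add: pr_empty DD_0)
next
  case (Suc k)
  have "\<forall>j\<le>k. 0 < DD B j" using Suc.prems by auto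
  then obtain N where R: "rinv B k N" and N: "\<forall>i<k. \<forall>j<k. 0 \<le> N i j"
    using chain_inv[where B=B, OF B] by blast
  define s where "s = ss B k N"
  define p where "p = pr (AB B) {..<k}"
  define d where "d = DD B k"
  have IH: "p * d \<le> 1" using Suc p_def d_def by auto
  have dS: "DD B (Suc k) = d * s" unfolding d_def s_def by (rule border_det[OF R])
  have d0: "0 < d" using Suc.prems d_def by auto
  have dS0: "0 \<le> DD B (Suc k)" using Suc.prems by (auto intro: less_imp_le)
  have p0: "0 \<le> p" unfolding p_def by (intro pr_nonneg AB_nonneg B)
  have V: "(\<Sum>j<k. B k j * (\<Sum>m<k. V B k k j m * B m k)) \<le> (\<Sum>j<k. B k j * uu B k N j)"
    unfolding uu_def
    by (intro sum_mono mult_left_mono B mult_right_mono walk_le_inv[OF B R]) (use N in auto)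
  have "pr (AB B) {..<Suc k} \<le> p * (1 + B k k + (\<Sum>j<k. B k j * (\<Sum>m<k. V B k k j m * B m k)))"
    unfolding p_def by (rule pr_step[OF B])
  also have "\<dots> \<le> p * (2 - s)"
    using V p0 unfolding s_def ss_def by (intro mult_left_mono) auto
  finally have pS: "pr (AB B) {..<Suc k} \<le> p * (2 - s)" .
  have "pr (AB B) {..<Suc k} * DD B (Suc k) \<le> p * (2 - s) * DD B (Suc k)"
    by (rule mult_right_mono[OF pS dS0])
  also have "\<dots> = (p * d) * ((2 - s) * s)" using dS by simp
  also have "\<dots> \<le> (p * d) * 1"
  proof (rule mult_left_mono)
    have h: "0 \<le> (s - 1) * (s - 1)" by simp
    then show "(2 - s) * s \<le> 1" by (simp add: algebra_simps)
    show "0 \<le> p * d" using p0 d0 by simp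
  qed
  finally show ?case using IH by simp
qed

lemma DD_expand:
  "DD B j = (\<Sum>p\<in>{p. p permutes {0..<j}}. signof p * (\<Prod>i=0..<j. (if i = p i then 1 else 0) - B i (p i)))"
proof -
  have "DD B j = (\<Sum>p\<in>{p. p permutes {0..<j}}. signof p * (\<Prod>i=0..<j. mk B j $$ (i, p i)))"
    unfolding DD_def by (rule det_def') (simp add: mk_def)
  also have "\<dots> = (\<Sum>p\<in>{p. p permutes {0..<j}}. signof p * (\<Prod>i=0..<j. (if i = p i then 1 else 0) - B i (p i)))"
  proof (rule sum.cong[OF refl])
    fix p assume p: "p \<in> {p. p permutes {0..<j}}"
    have "(\<Prod>i=0..<j. mk B j $$ (i, p i)) = (\<Prod>i=0..<j. (if i = p i then 1 else 0) - B i (p i))"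
    proof (rule prod.cong[OF refl])
      fix i assume i: "i \<in> {0..<j}"
      then have "p i \<in> {0..<j}" using p permutes_in_image[of p "{0..<j}" i] by simp
      then show "mk B j $$ (i, p i) = (if i = p i then 1 else 0) - B i (p i)"
        using i by (simp add: mk_def)
    qed
    then show "signof p * (\<Prod>i=0..<j. mk B j $$ (i, p i)) = signof p * (\<Prod>i=0..<j. (if i = p i then 1 else 0) - B i (p i))"
      by simp
  qed
  finally show ?thesis .
qed

lemma DD_cont: "continuous_on UNIV (\<lambda>\<gamma>::real. DD (\<lambda>x y. \<gamma> * B x y) j)"
  unfolding DD_expand by (intro continuous_intros)

lemma DD_zero: "DD (\<lambda>x y. 0 * B x y) j = 1"
proof -
  have "mk (\<lambda>x y. 0 * B x y) j = 1\<^sub>m j" by (rule eq_matI) (auto simp: mk_def)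
  then show ?thesis unfolding DD_def by simp
qed

lemma all_minors_pos:
  assumes B: "\<And>x y. 0 \<le> B x y"
    and H: "\<And>\<gamma>. 0 \<le> \<gamma> \<Longrightarrow> \<gamma> \<le> 1 \<Longrightarrow> 0 < DD (\<lambda>x y. \<gamma> * B x y) n"
  shows "\<forall>j\<le>n. 0 < DD B j"
proof (rule ccontr)
  define F where "F = (\<lambda>j (\<gamma>::real). DD (\<lambda>x y. \<gamma> * B x y) j)"
  have Fc: "continuous_on UNIV (F j)" for j unfolding F_def by (rule DD_cont)
  have Bg: "0 \<le> \<gamma> * B x y" if "0 \<le> \<gamma>" for \<gamma> x y using that B by simp
  define Bad where "Bad = {\<gamma>. 0 \<le> \<gamma> \<and> \<gamma> \<le> 1 \<and> (\<exists>j\<le>n. F j \<gamma> \<le> 0)}"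
  assume "\<not> (\<forall>j\<le>n. 0 < DD B j)"
  then obtain j0 where "j0 \<le> n" "DD B j0 \<le> 0" by auto
  then have "1 \<in> Bad" unfolding Bad_def F_def by auto
  then have ne: "Bad \<noteq> {}" by auto
  have bdd: "bdd_below Bad" unfolding Bad_def by (rule bdd_belowI[of _ 0]) auto
  define g where "g = Inf Bad"
  have g0: "0 \<le> g" unfolding g_def by (rule cInf_greatest[OF ne]) (auto simp: Bad_def)
  have g1: "g \<le> 1" unfolding g_def using cInf_lower[OF \<open>1 \<in> Bad\<close> bdd] .
  have below: "\<forall>j\<le>n. 0 < F j \<gamma>" if "0 \<le> \<gamma>" "\<gamma> < g" for \<gamma>
  proof (rule ccontr)
    assume "\<not> (\<forall>j\<le>n. 0 < F j \<gamma>)"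
    then have "\<gamma> \<in> Bad" unfolding Bad_def using that g1 by auto
    then have "g \<le> \<gamma>" unfolding g_def using cInf_lower bdd by blast
    then show False using that by simp
  qed
  have mono: "F n g \<le> F j g" if "j \<le> n" for j
  proof (cases "g = 0")
    case True
    then show ?thesis unfolding F_def using DD_zero by simp
  next
    case False
    then have gp: "0 < g" using g0 by simp
    show ?thesis
    proof (rule ccontr)
      assume "\<not> F n g \<le> F j g"
      then have "g \<in> {\<gamma>. F j \<gamma> < F n \<gamma>}" by simp
      moreover have "open {\<gamma>. F j \<gamma> < F n \<gamma>}" by (rule open_Collect_less[OF Fc Fc])
      ultimately obtain e where e: "e > 0" "\<And>y. dist y g < e \<Longrightarrow> y \<in> {\<gamma>. F j \<gamma> < F n \<gamma>}"
        unfolding open_dist by blast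
      define y where "y = max (g - e/2) (g/2)"
      have y: "0 \<le> y" "y < g" "dist y g < e" using e gp unfolding y_def dist_real_def by auto
      then have "F j y < F n y" using e by blast
      moreover have "F n y \<le> F j y"
        unfolding F_def by (rule DD_dec_chain[OF Bg[OF y(1)]]) (use below[OF y(1,2)] that in \<open>auto simp: F_def\<close>)
      ultimately show False by simp
    qed
  qed
  have gpos: "\<forall>j\<le>n. 0 < F j g"
    using mono H[OF g0 g1] unfolding F_def by (meson less_le_trans)
  have "open (\<Inter>j\<in>{..n}. {\<gamma>. 0 < F j \<gamma>})"
    by (intro open_INT ballI open_Collect_less continuous_on_const Fc) auto
  moreover have "g \<in> (\<Inter>j\<in>{..n}. {\<gamma>. 0 < F j \<gamma>})" using gpos by auto
  ultimately obtain e where e: "e > 0" "\<And>y. dist y g < e \<Longrightarrow> y \<in> (\<Inter>j\<in>{..n}. {\<gamma>. 0 < F j \<gamma>})"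
    unfolding open_dist by blast
  have "g + e \<le> Inf Bad"
  proof (rule cInf_greatest[OF ne])
    fix b assume b: "b \<in> Bad"
    then have gb: "g \<le> b" unfolding g_def using cInf_lower bdd by blast
    show "g + e \<le> b"
    proof (rule ccontr)
      assume "\<not> g + e \<le> b"
      then have "dist b g < e" using gb by (simp add: dist_real_def)
      then have "\<forall>j\<le>n. 0 < F j b" using e by auto
      then show False using b unfolding Bad_def by force
    qed
  qed
  then show False using e g_def by simp
qed

lemma main_bound:
  assumes B: "\<And>x y. 0 \<le> B x y"
    and H: "\<And>\<gamma>. 0 \<le> \<gamma> \<Longrightarrow> \<gamma> \<le> 1 \<Longrightarrow> 0 < DD (\<lambda>x y. \<gamma> * B x y) n"
  shows "pr (AB B) {..<n} * DD B n \<le> 1"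
  by (rule pr_DD_le1[OF B all_minors_pos[OF B H]])

lemma det_link:
  assumes S: "S \<in> carrier_mat n n"
  shows "det (1\<^sub>m n - \<gamma> \<cdot>\<^sub>m S) = DD (\<lambda>x y. \<gamma> * (if x < n \<and> y < n then S $$ (x,y) else 0)) n"
proof -
  have "1\<^sub>m n - \<gamma> \<cdot>\<^sub>m S = mk (\<lambda>x y. \<gamma> * (if x < n \<and> y < n then S $$ (x,y) else 0)) n"
    by (rule eq_matI) (use S in \<open>auto simp: mk_def\<close>)
  then show ?thesis unfolding DD_def by simp
qed

lemma perm_link:
  assumes S: "S \<in> carrier_mat n n"
  shows "perm (1\<^sub>m n + c \<cdot>\<^sub>m S) = pr (AB (\<lambda>x y. c * (if x < n \<and> y < n then S $$ (x,y) else 0))) {..<n}"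
proof -
  have d: "dim_row (1\<^sub>m n + c \<cdot>\<^sub>m S) = n" "dim_col (1\<^sub>m n + c \<cdot>\<^sub>m S) = n" using S by auto
  have "perm (1\<^sub>m n + c \<cdot>\<^sub>m S) = (\<Sum>p\<in>{p. p permutes {0..<n}}. \<Prod>i=0..<n. (1\<^sub>m n + c \<cdot>\<^sub>m S) $$ (i, p i))"
    unfolding perm_def d by simp
  also have "\<dots> = (\<Sum>p\<in>{p. p permutes {..<n}}. \<Prod>i\<in>{..<n}. AB (\<lambda>x y. c * (if x < n \<and> y < n then S $$ (x,y) else 0)) i (p i))"
    unfolding atLeast0LessThan
  proof (rule sum.cong[OF refl], rule prod.cong[OF refl])
    fix p i assume p: "p \<in> {p. p permutes {..<n}}" and i: "i \<in> {..<n}"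
    have "p i \<in> {..<n}" using permutes_in_image[of p "{..<n}" i] p i by simp
    then show "(1\<^sub>m n + c \<cdot>\<^sub>m S) $$ (i, p i) = AB (\<lambda>x y. c * (if x < n \<and> y < n then S $$ (x,y) else 0)) i (p i)"
      using i S by (simp add: AB_def)
  qed
  finally show ?thesis unfolding pr_def .
qed

theorem lemma3p4:
  fixes S :: "nat \<Rightarrow> real mat"
  assumes dims: "\<And>n. S n \<in> carrier_mat n n"
    and nonneg: "\<And>n i j. i < n \<Longrightarrow> j < n \<Longrightarrow> S n $$ (i, j) \<ge> 0"
    and assumption2: "\<And>\<epsilon>::real. 0 < \<epsilon> \<Longrightarrow> \<epsilon> \<le> 1 \<Longrightarrow>
       liminf (\<lambda>n. ereal (INF \<gamma>\<in>{0..1-\<epsilon>}. det (1\<^sub>m n - \<gamma> \<cdot>\<^sub>m S n))) > 0"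
    and eps: "0 < \<epsilon>" "\<epsilon> \<le> (1::real)"
  shows "(SUP n. ereal (perm (1\<^sub>m n + (1 - \<epsilon>) \<cdot>\<^sub>m S n))) < \<infinity>"
proof -
  define Bf where "Bf = (\<lambda>n x y. if x < n \<and> y < n then S n $$ (x,y) else 0)"
  have Bf0: "0 \<le> Bf n x y" for n x y unfolding Bf_def using nonneg by auto
  define f where "f = (\<lambda>n. INF \<gamma>\<in>{0..1-\<epsilon>}. det (1\<^sub>m n - \<gamma> \<cdot>\<^sub>m S n))"
  define L where "L = liminf (\<lambda>n. ereal (f n))"
  have L0: "0 < L" unfolding L_def f_def by (rule assumption2[OF eps])
  obtain c where c: "0 < c" "ereal c < L"
  proof (cases L)
    case (real r)
    then show ?thesis using L0 that[of "r/2"] by auto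
  next
    case PInf
    then show ?thesis using that[of 1] by auto
  next
    case MInf
    then show ?thesis using L0 by auto
  qed
  have "eventually (\<lambda>n. ereal c < ereal (f n)) sequentially"
    using less_LiminfD[of "ereal c" sequentially "\<lambda>n. ereal (f n)"] c L_def by blast
  then obtain N where N: "\<And>n. n \<ge> N \<Longrightarrow> c < f n" unfolding eventually_sequentially by auto
  have detDD: "det (1\<^sub>m n - \<gamma> \<cdot>\<^sub>m S n) = DD (\<lambda>x y. \<gamma> * Bf n x y) n" for n \<gamma>
    unfolding Bf_def by (rule det_link[OF dims])
  have bound: "perm (1\<^sub>m n + (1 - \<epsilon>) \<cdot>\<^sub>m S n) \<le> 1 / c" if n: "n \<ge> N" for n
  proof -
    have cont: "continuous_on {0..1-\<epsilon>} (\<lambda>\<gamma>. det (1\<^sub>m n - \<gamma> \<cdot>\<^sub>m S n))"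
      unfolding detDD by (rule continuous_on_subset[OF DD_cont]) simp
    obtain m where "\<forall>y\<in>{0..1-\<epsilon>}. det (1\<^sub>m n - m \<cdot>\<^sub>m S n) \<le> det (1\<^sub>m n - y \<cdot>\<^sub>m S n)"
      using continuous_attains_inf[OF compact_Icc _ cont] eps by auto
    then have bdd: "bdd_below ((\<lambda>\<gamma>. det (1\<^sub>m n - \<gamma> \<cdot>\<^sub>m S n)) ` {0..1-\<epsilon>})"
      by (intro bdd_belowI[of _ "det (1\<^sub>m n - m \<cdot>\<^sub>m S n)"]) auto
    have pos: "c < DD (\<lambda>x y. \<gamma> * Bf n x y) n" if "0 \<le> \<gamma>" "\<gamma> \<le> 1 - \<epsilon>" for \<gamma>
    proof -
      have "f n \<le> det (1\<^sub>m n - \<gamma> \<cdot>\<^sub>m S n)" unfolding f_def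
        by (rule cInf_lower[OF _ bdd]) (use that in auto)
      then show ?thesis using N[OF n] detDD by simp
    qed
    define B where "B = (\<lambda>x y. (1 - \<epsilon>) * Bf n x y)"
    have B0: "0 \<le> B x y" for x y unfolding B_def using Bf0 eps by simp
    have H: "0 < DD (\<lambda>x y. \<gamma> * B x y) n" if "0 \<le> \<gamma>" "\<gamma> \<le> 1" for \<gamma>
    proof -
      have e: "(\<lambda>x y. \<gamma> * B x y) = (\<lambda>x y. (\<gamma> * (1 - \<epsilon>)) * Bf n x y)" unfolding B_def by (simp add: mult.assoc)
      have "0 \<le> \<gamma> * (1 - \<epsilon>)" using that eps by simp
      moreover have "\<gamma> * (1 - \<epsilon>) \<le> 1 - \<epsilon>" using that eps by (simp add: mult_left_le_one_le)
      ultimately show ?thesis unfolding e using pos c(1) by (meson less_trans)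
    qed
    have main: "pr (AB B) {..<n} * DD B n \<le> 1" by (rule main_bound[OF B0 H])
    have DB: "c < DD B n" using pos[of "1 - \<epsilon>"] eps unfolding B_def by simp
    have pn: "0 \<le> pr (AB B) {..<n}" by (intro pr_nonneg AB_nonneg B0)
    have "pr (AB B) {..<n} * c \<le> 1"
      using main mult_left_mono[OF less_imp_le[OF DB] pn] by linarith
    then have "pr (AB B) {..<n} \<le> 1 / c" using c(1) by (simp add: field_simps)
    moreover have "perm (1\<^sub>m n + (1 - \<epsilon>) \<cdot>\<^sub>m S n) = pr (AB B) {..<n}"
      unfolding B_def Bf_def by (rule perm_link[OF dims])
    ultimately show ?thesis by simp
  qed
  define K where "K = max (1 / c) (Max ((\<lambda>n. perm (1\<^sub>m n + (1 - \<epsilon>) \<cdot>\<^sub>m S n)) ` {..<N}) )"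
  have "perm (1\<^sub>m n + (1 - \<epsilon>) \<cdot>\<^sub>m S n) \<le> K" for n
  proof (cases "n < N")
    case True
    then show ?thesis unfolding K_def by (intro max.coboundedI2 Max_ge) auto
  next
    case False
    then show ?thesis using bound[of n] unfolding K_def by simp
  qed
  then have "(SUP n. ereal (perm (1\<^sub>m n + (1 - \<epsilon>) \<cdot>\<^sub>m S n))) \<le> ereal K"
    by (intro SUP_least) simp
  moreover have "ereal K < \<infinity>" by simp
  ultimately show ?thesis by (rule order_le_less_trans)
qed

end
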